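(* Let $H$ be a pointed Hopf algebra and let $Q$ be the Ext-quiver of $\mathcal{M}^H$. Then at each vertex $v$ of $Q$, the number of arrows ending at $v$ equals the number of arrows starting at $v$.
   Context: The Ext-quiver of $\mathcal{M}^H$ has vertex set $G(H)$ and $\dim P(g,h)/\mathbb{K}(g-h)$ arrows $g\to h$, where $P(g,h)=\{x\in H:\Delta(x)=g\otimes x+x\otimes h\}$. *)

theory Defs
  imports "HOL-Library.Poly_Mapping" "HOL-Library.Equipollence"
begin

text \<open>Vector spaces over a field 'k are modelled as free vector spaces
  of finitely supported functions on a basis type 'b; every vector
  space is of this form.  Linear maps are given by their values on basis vectors.\<close>

definition smul :: "'k::field \<Rightarrow> ('b \<Rightarrow>\<^sub>0 'k) \<Rightarrow> ('b \<Rightarrow>\<^sub>0 'k)" where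
  "smul c x = Poly_Mapping.map (\<lambda>a. c * a) x"

definition bv :: "'b \<Rightarrow> ('b \<Rightarrow>\<^sub>0 'k::field)" where
  "bv b = Poly_Mapping.single b 1"

definition lext :: "('b \<Rightarrow> ('c \<Rightarrow>\<^sub>0 'k::field)) \<Rightarrow> ('b \<Rightarrow>\<^sub>0 'k) \<Rightarrow> ('c \<Rightarrow>\<^sub>0 'k)" where
  "lext f x = (\<Sum>b\<in>Poly_Mapping.keys x. smul (Poly_Mapping.lookup x b) (f b))"

definition lfun :: "('b \<Rightarrow> 'k::field) \<Rightarrow> ('b \<Rightarrow>\<^sub>0 'k) \<Rightarrow> 'k" where
  "lfun f x = (\<Sum>b\<in>Poly_Mapping.keys x. Poly_Mapping.lookup x b * f b)"

definition tens :: "('b \<Rightarrow>\<^sub>0 'k::field) \<Rightarrow> ('c \<Rightarrow>\<^sub>0 'k) \<Rightarrow> ('b \<times> 'c \<Rightarrow>\<^sub>0 'k)" where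
  "tens x y = (\<Sum>a\<in>Poly_Mapping.keys x. \<Sum>b\<in>Poly_Mapping.keys y. Poly_Mapping.single (a, b) (Poly_Mapping.lookup x a * Poly_Mapping.lookup y b))"

definition tmap :: "('a \<Rightarrow> ('c \<Rightarrow>\<^sub>0 'k::field)) \<Rightarrow> ('b \<Rightarrow> ('d \<Rightarrow>\<^sub>0 'k))
    \<Rightarrow> ('a \<times> 'b \<Rightarrow>\<^sub>0 'k) \<Rightarrow> ('c \<times> 'd \<Rightarrow>\<^sub>0 'k)" where
  "tmap f g = lext (\<lambda>(a, b). tens (f a) (g b))"

definition bilin :: "('a \<Rightarrow> 'b \<Rightarrow> ('c \<Rightarrow>\<^sub>0 'k::field)) \<Rightarrow> ('a \<Rightarrow>\<^sub>0 'k) \<Rightarrow> ('b \<Rightarrow>\<^sub>0 'k) \<Rightarrow> ('c \<Rightarrow>\<^sub>0 'k)" where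
  "bilin m x y = (\<Sum>a\<in>Poly_Mapping.keys x. \<Sum>b\<in>Poly_Mapping.keys y. smul (Poly_Mapping.lookup x a * Poly_Mapping.lookup y b) (m a b))"

text \<open>Hopf algebra structure on H: multiplication mu (on basis pairs),
  unit element u, comultiplication D (on basis), counit eps (on basis), antipode S (on basis).\<close>
definition hopf_algebra ::
  "('b \<Rightarrow> 'b \<Rightarrow> ('b \<Rightarrow>\<^sub>0 'k::field)) \<Rightarrow> ('b \<Rightarrow>\<^sub>0 'k) \<Rightarrow> ('b \<Rightarrow> ('b \<times> 'b \<Rightarrow>\<^sub>0 'k))
     \<Rightarrow> ('b \<Rightarrow> 'k) \<Rightarrow> ('b \<Rightarrow> ('b \<Rightarrow>\<^sub>0 'k)) \<Rightarrow> bool" where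
  "hopf_algebra mu u D eps S \<longleftrightarrow>
     (\<forall>a b c. bilin mu (bilin mu (bv a) (bv b)) (bv c) = bilin mu (bv a) (bilin mu (bv b) (bv c)))
   \<and> (\<forall>a. bilin mu u (bv a) = bv a \<and> bilin mu (bv a) u = bv a)
   \<and> (\<forall>a. lext (\<lambda>((x, y), z). bv (x, (y, z))) (tmap D bv (D a)) = tmap bv D (D a))
   \<and> (\<forall>a. lext (\<lambda>(x, y). smul (eps x) (bv y)) (D a) = bv a
         \<and> lext (\<lambda>(x, y). smul (eps y) (bv x)) (D a) = bv a)
   \<and> (\<forall>a b. lext D (bilin mu (bv a) (bv b))
            = bilin (\<lambda>(a1, a2) (b1, b2). tens (mu a1 b1) (mu a2 b2)) (D a) (D b))
   \<and> lext D u = tens u u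
   \<and> (\<forall>a b. lfun eps (bilin mu (bv a) (bv b)) = eps a * eps b)
   \<and> lfun eps u = 1
   \<and> (\<forall>a. lext (\<lambda>(x, y). bilin mu (S x) (bv y)) (D a) = smul (eps a) u
         \<and> lext (\<lambda>(x, y). bilin mu (bv x) (S y)) (D a) = smul (eps a) u)"

definition subspace :: "('b \<Rightarrow>\<^sub>0 'k::field) set \<Rightarrow> bool" where
  "subspace C \<longleftrightarrow> 0 \<in> C \<and> (\<forall>x\<in>C. \<forall>y\<in>C. x + y \<in> C) \<and> (\<forall>c. \<forall>x\<in>C. smul c x \<in> C)"

definition tensor_span :: "('b \<Rightarrow>\<^sub>0 'k::field) set \<Rightarrow> ('b \<times> 'b \<Rightarrow>\<^sub>0 'k) set" where
  "tensor_span C = {\<Sum>i<n. tens (x i) (y i) | (n::nat) x y. \<forall>i<n. x i \<in> C \<and> y i \<in> C}"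

definition subcoalgebra :: "('b \<Rightarrow> ('b \<times> 'b \<Rightarrow>\<^sub>0 'k::field)) \<Rightarrow> ('b \<Rightarrow>\<^sub>0 'k) set \<Rightarrow> bool" where
  "subcoalgebra D C \<longleftrightarrow> subspace C \<and> (\<forall>x\<in>C. lext D x \<in> tensor_span C)"

definition simple_subcoalgebra :: "('b \<Rightarrow> ('b \<times> 'b \<Rightarrow>\<^sub>0 'k::field)) \<Rightarrow> ('b \<Rightarrow>\<^sub>0 'k) set \<Rightarrow> bool" where
  "simple_subcoalgebra D C \<longleftrightarrow> subcoalgebra D C \<and> C \<noteq> {0}
     \<and> (\<forall>C'. subcoalgebra D C' \<and> C' \<subseteq> C \<longrightarrow> C' = {0} \<or> C' = C)"

definition pointed :: "('b \<Rightarrow> ('b \<times> 'b \<Rightarrow>\<^sub>0 'k::field)) \<Rightarrow> bool" where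
  "pointed D \<longleftrightarrow> (\<forall>C. simple_subcoalgebra D C \<longrightarrow> (\<exists>v. v \<noteq> 0 \<and> C = range (\<lambda>c. smul c v)))"

definition grouplikes :: "('b \<Rightarrow> ('b \<times> 'b \<Rightarrow>\<^sub>0 'k::field)) \<Rightarrow> ('b \<Rightarrow>\<^sub>0 'k) set" where
  "grouplikes D = {g. g \<noteq> 0 \<and> lext D g = tens g g}"

definition skew_prim :: "('b \<Rightarrow> ('b \<times> 'b \<Rightarrow>\<^sub>0 'k::field)) \<Rightarrow> ('b \<Rightarrow>\<^sub>0 'k) \<Rightarrow> ('b \<Rightarrow>\<^sub>0 'k)
     \<Rightarrow> ('b \<Rightarrow>\<^sub>0 'k) set" where
  "skew_prim D g h = {x. lext D x = tens g x + tens x h}"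

text \<open>B \<subseteq> P(g,h) maps bijectively onto a basis of P(g,h)/K(g-h); so the number of
  arrows g \<rightarrow> h of the Ext-quiver is the cardinality of B.\<close>
definition quot_basis :: "('b \<Rightarrow> ('b \<times> 'b \<Rightarrow>\<^sub>0 'k::field)) \<Rightarrow> ('b \<Rightarrow>\<^sub>0 'k) \<Rightarrow> ('b \<Rightarrow>\<^sub>0 'k)
     \<Rightarrow> ('b \<Rightarrow>\<^sub>0 'k) set \<Rightarrow> bool" where
  "quot_basis D g h B \<longleftrightarrow> B \<subseteq> skew_prim D g h
     \<and> (\<forall>X c. finite X \<and> X \<subseteq> B \<and> (\<Sum>x\<in>X. smul (c x) x) \<in> range (\<lambda>a. smul a (g - h))
              \<longrightarrow> (\<forall>x\<in>X. c x = 0))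
     \<and> (\<forall>x\<in>skew_prim D g h. \<exists>X c a. finite X \<and> X \<subseteq> B
              \<and> x = smul a (g - h) + (\<Sum>y\<in>X. smul (c y) y))"

end

theory Submission
  imports Defs "HOL.Vector_Spaces" "HOL-Algebra.Free_Abelian_Groups"
begin


lemma lookup_smul[simp]: "Poly_Mapping.lookup (smul c x) k = c * Poly_Mapping.lookup x k"
  unfolding smul_def by transfer (simp add: when_def)

lemma smul_add_right: "smul c (x + y) = smul c x + smul c y"
  by (rule poly_mapping_eqI) (simp add: lookup_add algebra_simps)
lemma smul_add_left: "smul (c + d) x = smul c x + smul d x"
  by (rule poly_mapping_eqI) (simp add: lookup_add algebra_simps)
lemma smul_smul[simp]: "smul c (smul d x) = smul (c * d) x"
  by (rule poly_mapping_eqI) (simp add: algebra_simps)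
lemma smul_one[simp]: "smul 1 x = x"
  by (rule poly_mapping_eqI) simp
lemma smul_zero_left[simp]: "smul 0 x = 0"
  by (rule poly_mapping_eqI) simp
lemma smul_zero_right[simp]: "smul c 0 = 0"
  by (rule poly_mapping_eqI) simp
lemma smul_minus_right: "smul c (x - y) = smul c x - smul c y"
  by (rule poly_mapping_eqI) (simp add: lookup_minus algebra_simps)
lemma smul_minus_left: "smul (c - d) x = smul c x - smul d x"
  by (rule poly_mapping_eqI) (simp add: lookup_minus algebra_simps)
lemma smul_sum_right: "smul c (sum f A) = (\<Sum>a\<in>A. smul c (f a))"
  by (induct A rule: infinite_finite_induct) (simp_all add: smul_add_right)
lemma smul_sum_left: "smul (sum f A) x = (\<Sum>a\<in>A. smul (f a) x)"
  by (induct A rule: infinite_finite_induct) (simp_all add: smul_add_left)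
lemma smul_single: "smul c (Poly_Mapping.single k a) = Poly_Mapping.single k (c * a)"
  by (rule poly_mapping_eqI) (simp add: lookup_single when_def)
lemma keys_smul: "Poly_Mapping.keys (smul c x) \<subseteq> Poly_Mapping.keys x"
  by (auto simp: in_keys_iff)

interpretation vs: vector_space "smul :: 'k::field \<Rightarrow> ('b \<Rightarrow>\<^sub>0 'k) \<Rightarrow> _"
  by unfold_locales (simp_all add: smul_add_right smul_add_left)

definition lin :: "(('a \<Rightarrow>\<^sub>0 'k::field) \<Rightarrow> ('c \<Rightarrow>\<^sub>0 'k)) \<Rightarrow> bool" where
  "lin T \<longleftrightarrow> (\<forall>x y. T (x + y) = T x + T y) \<and> (\<forall>c x. T (smul c x) = smul c (T x))"

lemma linI: "(\<And>x y. T (x + y) = T x + T y) \<Longrightarrow> (\<And>c x. T (smul c x) = smul c (T x)) \<Longrightarrow> lin T"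
  by (simp add: lin_def)
lemma lin_add: "lin T \<Longrightarrow> T (x + y) = T x + T y" by (simp add: lin_def)
lemma lin_smul: "lin T \<Longrightarrow> T (smul c x) = smul c (T x)" by (simp add: lin_def)
lemma lin_zero: "lin T \<Longrightarrow> T 0 = 0"
  using lin_smul[of T 0 0] by simp
lemma lin_sum: "lin T \<Longrightarrow> T (sum f A) = (\<Sum>a\<in>A. T (f a))"
  by (induct A rule: infinite_finite_induct) (simp_all add: lin_zero lin_add)
lemma lin_minus: "lin T \<Longrightarrow> T (x - y) = T x - T y"
  using lin_add[of T "x - y" y] by (simp add: algebra_simps)
lemma lin_comp: "lin T \<Longrightarrow> lin T' \<Longrightarrow> lin (\<lambda>x. T (T' x))"
  by (simp add: lin_def)
lemma lin_id: "lin (\<lambda>x. x)" by (simp add: lin_def)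
lemma lin_smul_fixed: "lin (smul c)" by (simp add: lin_def smul_add_right mult.commute)

lemma sum_delta_mult: "finite A \<Longrightarrow> (\<Sum>b\<in>A. (f b :: 'a::semiring_1) * (if b = k then 1 else 0)) = (if k \<in> A then f k else 0)"
proof -
  have "\<And>b. f b * (if b = k then 1 else 0) = (if b = k then f b else 0)" by simp
  moreover assume "finite A"
  ultimately show ?thesis by (simp add: sum.delta')
qed

lemma decomp: "x = (\<Sum>b\<in>Poly_Mapping.keys x. smul (Poly_Mapping.lookup x b) (bv b))"
proof (rule poly_mapping_eqI)
  fix k
  show "Poly_Mapping.lookup x k = Poly_Mapping.lookup (\<Sum>b\<in>Poly_Mapping.keys x. smul (Poly_Mapping.lookup x b) (bv b)) k"
  proof -
    have "Poly_Mapping.lookup (\<Sum>b\<in>Poly_Mapping.keys x. smul (Poly_Mapping.lookup x b) (bv b)) k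
      = (\<Sum>b\<in>Poly_Mapping.keys x. if b = k then Poly_Mapping.lookup x b else 0)"
      by (auto simp: lookup_sum bv_def lookup_single when_def sum_delta_mult in_keys_iff)
    also have "\<dots> = Poly_Mapping.lookup x k"
      by (simp add: sum.delta' in_keys_iff)
    finally show ?thesis by simp
  qed
qed

lemma lext_superset:
  assumes "finite A" "Poly_Mapping.keys x \<subseteq> A"
  shows "lext f x = (\<Sum>b\<in>A. smul (Poly_Mapping.lookup x b) (f b))"
  unfolding lext_def
  by (rule sum.mono_neutral_left) (use assms in \<open>auto simp: in_keys_iff\<close>)

lemma lin_lext: "lin (lext (f :: 'b \<Rightarrow> ('c \<Rightarrow>\<^sub>0 'k::field)))"
proof (rule linI)
  fix x y :: "'b \<Rightarrow>\<^sub>0 'k"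
  let ?A = "Poly_Mapping.keys x \<union> Poly_Mapping.keys y"
  have k: "Poly_Mapping.keys (x + y) \<subseteq> ?A" by (rule keys_add)
  show "lext f (x + y) = lext f x + lext f y"
    by (simp add: lext_superset[OF _ k] lext_superset[of ?A x] lext_superset[of ?A y]
        lookup_add smul_add_left sum.distrib)
next
  fix c and x :: "'b \<Rightarrow>\<^sub>0 'k"
  have "lext f (smul c x) = (\<Sum>b\<in>Poly_Mapping.keys x. smul (Poly_Mapping.lookup (smul c x) b) (f b))"
    by (rule lext_superset[OF _ keys_smul]) simp
  then show "lext f (smul c x) = smul c (lext f x)"
    by (simp add: lext_def smul_sum_right)
qed

lemma lext_bv[simp]: "lext f (bv b) = f b"
  by (simp add: lext_def bv_def)

lemma lin_rep: "lin T \<Longrightarrow> T x = lext (\<lambda>b. T (bv b)) x"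
proof -
  assume T: "lin T"
  have "T x = T (\<Sum>b\<in>Poly_Mapping.keys x. smul (Poly_Mapping.lookup x b) (bv b))"
    by (rule arg_cong[OF decomp])
  also have "\<dots> = lext (\<lambda>b. T (bv b)) x"
    by (simp add: lin_sum[OF T] lin_smul[OF T] lext_def)
  finally show ?thesis .
qed

lemma lin_eq: "lin T \<Longrightarrow> lin T' \<Longrightarrow> (\<And>b. T (bv b) = T' (bv b)) \<Longrightarrow> T x = T' x"
  using lin_rep[of T x] lin_rep[of T' x] by simp

lemma lext_bv_id[simp]: "lext bv x = x"
  using lin_rep[OF lin_id, of x] by simp

lemma bilin_lext: "bilin m x y = lext (\<lambda>a. lext (m a) y) x"
  by (simp add: bilin_def lext_def smul_sum_right mult.commute)

lemma bilin_lext2: "bilin m x y = lext (\<lambda>b. lext (\<lambda>a. m a b) x) y"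
  unfolding bilin_def lext_def smul_sum_right smul_smul
  by (subst sum.swap) (simp add: mult.commute)

lemma lin_bilin1: "lin (\<lambda>x. bilin m x y)"
  by (simp add: bilin_lext lin_lext)
lemma lin_bilin2: "lin (\<lambda>y. bilin m x y)"
  unfolding bilin_lext2 by (rule lin_lext)
lemma bilin_bv: "bilin m (bv a) (bv b) = m a b"
  by (simp add: bilin_lext)

lemma tens_bilin: "tens x y = bilin (\<lambda>a b. bv (a, b)) x y"
  by (simp add: tens_def bilin_def bv_def smul_single)
lemma lin_tens1: "lin (\<lambda>x. tens x y)"
  unfolding tens_bilin by (rule lin_bilin1)
lemma lin_tens2: "lin (\<lambda>y. tens x y)"
  unfolding tens_bilin by (rule lin_bilin2)
lemma tens_bv[simp]: "tens (bv a) (bv b) = bv (a, b)"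
  by (simp add: tens_bilin bilin_bv)

lemma lfun_lext: "lfun f x = Poly_Mapping.lookup (lext (\<lambda>b. Poly_Mapping.single () (f b)) x) ()"
  by (simp add: lfun_def lext_def lookup_sum)

lemma lfun_add: "lfun f (x + y) = lfun f x + lfun f y"
  by (simp add: lfun_lext lin_add[OF lin_lext] lookup_add)
lemma lfun_smul: "lfun f (smul c x) = c * lfun f x"
  by (simp add: lfun_lext lin_smul[OF lin_lext])
lemma lfun_bv[simp]: "lfun f (bv b) = f b"
  by (simp add: lfun_def bv_def)
lemma lin_lfun_smul: "lin (\<lambda>x. smul (lfun f x) y)"
  by (simp add: lin_def lfun_add lfun_smul smul_add_left)



locale hopf =
  fixes mu :: "'b \<Rightarrow> 'b \<Rightarrow> ('b \<Rightarrow>\<^sub>0 'k::field)"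
    and u :: "'b \<Rightarrow>\<^sub>0 'k"
    and D :: "'b \<Rightarrow> ('b \<times> 'b \<Rightarrow>\<^sub>0 'k)"
    and eps :: "'b \<Rightarrow> 'k"
    and S :: "'b \<Rightarrow> ('b \<Rightarrow>\<^sub>0 'k)"
  assumes H: "hopf_algebra mu u D eps S"
begin

abbreviation m where "m \<equiv> bilin mu"
abbreviation mu2 where "mu2 \<equiv> (\<lambda>(a1, a2) (b1, b2). tens (mu a1 b1) (mu a2 b2))"
abbreviation M2 where "M2 \<equiv> bilin mu2"
abbreviation Dl where "Dl \<equiv> lext D"
abbreviation Sl where "Sl \<equiv> lext S"
abbreviation ep where "ep \<equiv> lfun eps"

lemma ax_assoc: "m (m (bv a) (bv b)) (bv c) = m (bv a) (m (bv b) (bv c))"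
  using H unfolding hopf_algebra_def by blast
lemma ax_unit: "m u (bv a) = bv a" "m (bv a) u = bv a"
  using H unfolding hopf_algebra_def by blast+
lemma ax_counit: "lext (\<lambda>(x, y). smul (eps x) (bv y)) (D a) = bv a"
   "lext (\<lambda>(x, y). smul (eps y) (bv x)) (D a) = bv a"
  using H unfolding hopf_algebra_def by blast+
lemma ax_mult: "Dl (m (bv a) (bv b)) = M2 (D a) (D b)"
  using H unfolding hopf_algebra_def by blast
lemma ax_Du: "Dl u = tens u u"
  using H unfolding hopf_algebra_def by blast
lemma ax_epsu: "ep u = 1"
  using H unfolding hopf_algebra_def by blast
lemma ax_anti: "lext (\<lambda>(x, y). m (S x) (bv y)) (D a) = smul (eps a) u"
    "lext (\<lambda>(x, y). m (bv x) (S y)) (D a) = smul (eps a) u"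
  using H unfolding hopf_algebra_def by blast+

lemma lin_m1: "lin (\<lambda>x. m x y)" by (rule lin_bilin1)
lemma lin_m2: "lin (\<lambda>y. m x y)" by (rule lin_bilin2)
lemma lin_M1: "lin (\<lambda>x. M2 x y)" by (rule lin_bilin1)
lemma lin_M2: "lin (\<lambda>y. M2 x y)" by (rule lin_bilin2)

lemma assoc: "m (m x y) z = m x (m y z)"
proof -
  have b2: "m (m (bv a) (bv b)) z = m (bv a) (m (bv b) z)" for a b z
    by (rule lin_eq[where T="\<lambda>z. m (m (bv a) (bv b)) z" and T'="\<lambda>z. m (bv a) (m (bv b) z)"])
      (rule lin_m2, rule lin_comp[OF lin_m2 lin_m2], rule ax_assoc)
  have b1: "m (m (bv a) y) z = m (bv a) (m y z)" for a y z
    by (rule lin_eq[where T="\<lambda>y. m (m (bv a) y) z" and T'="\<lambda>y. m (bv a) (m y z)"])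
      (rule lin_comp[OF lin_m1 lin_m2], rule lin_comp[OF lin_m2 lin_m1], rule b2)
  show ?thesis
    by (rule lin_eq[where T="\<lambda>x. m (m x y) z" and T'="\<lambda>x. m x (m y z)"])
      (rule lin_comp[OF lin_m1 lin_m1], rule lin_m1, rule b1)
qed

lemma unit_l[simp]: "m u x = x"
  by (rule lin_eq[where T="\<lambda>x. m u x" and T'="\<lambda>x. x"]) (rule lin_m2, rule lin_id, rule ax_unit)
lemma unit_r[simp]: "m x u = x"
  by (rule lin_eq[where T="\<lambda>x. m x u" and T'="\<lambda>x. x"]) (rule lin_m1, rule lin_id, rule ax_unit)

lemma mult: "Dl (m x y) = M2 (Dl x) (Dl y)"
proof -
  have b1: "Dl (m (bv a) y) = M2 (D a) (Dl y)" for a y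
    by (rule lin_eq[where T="\<lambda>y. Dl (m (bv a) y)" and T'="\<lambda>y. M2 (D a) (Dl y)"])
      (rule lin_comp[OF lin_lext lin_m2], rule lin_comp[OF lin_M2 lin_lext], simp only: lext_bv ax_mult)
  show ?thesis
    by (rule lin_eq[where T="\<lambda>x. Dl (m x y)" and T'="\<lambda>x. M2 (Dl x) (Dl y)"])
      (rule lin_comp[OF lin_lext lin_m1], rule lin_comp[OF lin_M1 lin_lext], simp only: lext_bv b1)
qed

lemma tens_mult: "M2 (tens x y) (tens z w) = tens (m x z) (m y w)"
proof -
  have b3: "M2 (tens (bv a) (bv b)) (tens (bv c) (bv d)) = tens (m (bv a) (bv c)) (m (bv b) (bv d))" for a b c d
    by (simp add: bilin_bv)
  have b2: "M2 (tens (bv a) (bv b)) (tens (bv c) w) = tens (m (bv a) (bv c)) (m (bv b) w)" for a b c w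
    by (rule lin_eq[where T="\<lambda>w. M2 (tens (bv a) (bv b)) (tens (bv c) w)" and T'="\<lambda>w. tens (m (bv a) (bv c)) (m (bv b) w)"])
      (rule lin_comp[OF lin_M2 lin_tens2], rule lin_comp[OF lin_tens2 lin_m2], rule b3)
  have b1: "M2 (tens (bv a) (bv b)) (tens z w) = tens (m (bv a) z) (m (bv b) w)" for a b z w
    by (rule lin_eq[where T="\<lambda>z. M2 (tens (bv a) (bv b)) (tens z w)" and T'="\<lambda>z. tens (m (bv a) z) (m (bv b) w)"])
      (rule lin_comp[OF lin_M2 lin_tens1], rule lin_comp[OF lin_tens1 lin_m2], rule b2)
  have b0: "M2 (tens (bv a) y) (tens z w) = tens (m (bv a) z) (m y w)" for a y z w
    by (rule lin_eq[where T="\<lambda>y. M2 (tens (bv a) y) (tens z w)" and T'="\<lambda>y. tens (m (bv a) z) (m y w)"])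
      (rule lin_comp[OF lin_M1 lin_tens2], rule lin_comp[OF lin_tens2 lin_m1], rule b1)
  show ?thesis
    by (rule lin_eq[where T="\<lambda>x. M2 (tens x y) (tens z w)" and T'="\<lambda>x. tens (m x z) (m y w)"])
      (rule lin_comp[OF lin_M1 lin_tens1], rule lin_comp[OF lin_tens1 lin_m1], rule b0)
qed

lemma bv_pair: "bv p = tens (bv (fst p)) (bv (snd p))"
  by (cases p) simp

lemma assoc2: "M2 (M2 X Y) Z = M2 X (M2 Y Z)"
proof -
  have b2: "M2 (M2 (bv p) (bv q)) (bv r) = M2 (bv p) (M2 (bv q) (bv r))" for p q r
    by (simp only: bv_pair tens_mult assoc)
  have b1: "M2 (M2 (bv p) (bv q)) Z = M2 (bv p) (M2 (bv q) Z)" for p q Z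
    by (rule lin_eq[where T="\<lambda>z. M2 (M2 (bv p) (bv q)) z" and T'="\<lambda>z. M2 (bv p) (M2 (bv q) z)"])
      (rule lin_M2, rule lin_comp[OF lin_M2 lin_M2], rule b2)
  have b0: "M2 (M2 (bv p) Y) Z = M2 (bv p) (M2 Y Z)" for p Y Z
    by (rule lin_eq[where T="\<lambda>y. M2 (M2 (bv p) y) Z" and T'="\<lambda>y. M2 (bv p) (M2 y Z)"])
      (rule lin_comp[OF lin_M1 lin_M2], rule lin_comp[OF lin_M2 lin_M1], rule b1)
  show ?thesis
    by (rule lin_eq[where T="\<lambda>x. M2 (M2 x Y) Z" and T'="\<lambda>x. M2 x (M2 Y Z)"])
      (rule lin_comp[OF lin_M1 lin_M1], rule lin_M1, rule b0)
qed

lemma unit2_l: "M2 (tens u u) X = X"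
  by (rule lin_eq[where T="\<lambda>x. M2 (tens u u) x" and T'="\<lambda>x. x"])
    (rule lin_M2, rule lin_id, case_tac b, simp only: tens_bv[symmetric] tens_mult unit_l)
lemma unit2_r: "M2 X (tens u u) = X"
  by (rule lin_eq[where T="\<lambda>x. M2 x (tens u u)" and T'="\<lambda>x. x"])
    (rule lin_M1, rule lin_id, case_tac b, simp only: tens_bv[symmetric] tens_mult unit_r)

end


context hopf begin

abbreviation "E1 \<equiv> (\<lambda>(x, y). smul (eps x) (bv y))"
abbreviation "E2 \<equiv> (\<lambda>(x, y). smul (eps y) (bv x))"
abbreviation "A1 \<equiv> (\<lambda>(x, y). m (S x) (bv y))"
abbreviation "A2 \<equiv> (\<lambda>(x, y). m (bv x) (S y))"

lemma counit1_tens: "lext E1 (tens x y) = smul (ep x) y"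
proof -
  have b: "lext E1 (tens (bv a) y) = smul (ep (bv a)) y" for a y
    by (rule lin_eq[where T="\<lambda>y. lext E1 (tens (bv a) y)" and T'="\<lambda>y. smul (ep (bv a)) y"])
      (rule lin_comp[OF lin_lext lin_tens2], rule lin_smul_fixed, simp)
  show ?thesis
    by (rule lin_eq[where T="\<lambda>x. lext E1 (tens x y)" and T'="\<lambda>x. smul (ep x) y"])
      (rule lin_comp[OF lin_lext lin_tens1], rule lin_lfun_smul, rule b)
qed

lemma counit2_tens: "lext E2 (tens x y) = smul (ep y) x"
proof -
  have b: "lext E2 (tens x (bv a)) = smul (ep (bv a)) x" for a x
    by (rule lin_eq[where T="\<lambda>x. lext E2 (tens x (bv a))" and T'="\<lambda>x. smul (ep (bv a)) x"])
      (rule lin_comp[OF lin_lext lin_tens1], rule lin_smul_fixed, simp)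
  show ?thesis
    by (rule lin_eq[where T="\<lambda>y. lext E2 (tens x y)" and T'="\<lambda>y. smul (ep y) x"])
      (rule lin_comp[OF lin_lext lin_tens2], rule lin_lfun_smul, rule b)
qed

lemma counit1_ext: "lext E1 (Dl x) = x"
  by (rule lin_eq[where T="\<lambda>x. lext E1 (Dl x)" and T'="\<lambda>x. x"])
    (rule lin_comp[OF lin_lext lin_lext], rule lin_id, simp only: lext_bv ax_counit)

lemma counit2_ext: "lext E2 (Dl x) = x"
  by (rule lin_eq[where T="\<lambda>x. lext E2 (Dl x)" and T'="\<lambda>x. x"])
    (rule lin_comp[OF lin_lext lin_lext], rule lin_id, simp only: lext_bv ax_counit)

lemma anti1_tens: "lext A1 (tens x y) = m (Sl x) y"
proof -
  have b: "lext A1 (tens (bv a) y) = m (Sl (bv a)) y" for a y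
    by (rule lin_eq[where T="\<lambda>y. lext A1 (tens (bv a) y)" and T'="\<lambda>y. m (Sl (bv a)) y"])
      (rule lin_comp[OF lin_lext lin_tens2], rule lin_m2, simp)
  show ?thesis
    by (rule lin_eq[where T="\<lambda>x. lext A1 (tens x y)" and T'="\<lambda>x. m (Sl x) y"])
      (rule lin_comp[OF lin_lext lin_tens1], rule lin_comp[OF lin_m1 lin_lext], rule b)
qed

lemma anti2_tens: "lext A2 (tens x y) = m x (Sl y)"
proof -
  have b: "lext A2 (tens x (bv a)) = m x (Sl (bv a))" for a x
    by (rule lin_eq[where T="\<lambda>x. lext A2 (tens x (bv a))" and T'="\<lambda>x. m x (Sl (bv a))"])
      (rule lin_comp[OF lin_lext lin_tens1], rule lin_m1, simp)
  show ?thesis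
    by (rule lin_eq[where T="\<lambda>y. lext A2 (tens x y)" and T'="\<lambda>y. m x (Sl y)"])
      (rule lin_comp[OF lin_lext lin_tens2], rule lin_comp[OF lin_m2 lin_lext], rule b)
qed

lemma anti1_ext: "lext A1 (Dl x) = smul (ep x) u"
  by (rule lin_eq[where T="\<lambda>x. lext A1 (Dl x)" and T'="\<lambda>x. smul (ep x) u"])
    (rule lin_comp[OF lin_lext lin_lext], rule lin_lfun_smul, simp only: lext_bv lfun_bv ax_anti)

lemma anti2_ext: "lext A2 (Dl x) = smul (ep x) u"
  by (rule lin_eq[where T="\<lambda>x. lext A2 (Dl x)" and T'="\<lambda>x. smul (ep x) u"])
    (rule lin_comp[OF lin_lext lin_lext], rule lin_lfun_smul, simp only: lext_bv lfun_bv ax_anti)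

abbreviation G where "G \<equiv> grouplikes D"

lemma GD: "g \<in> G \<Longrightarrow> g \<noteq> 0" "g \<in> G \<Longrightarrow> Dl g = tens g g"
  by (simp_all add: grouplikes_def)

lemma smul_eq_self: "smul c (x::'c \<Rightarrow>\<^sub>0 'k) = x \<Longrightarrow> x \<noteq> 0 \<Longrightarrow> c = 1"
proof -
  assume a: "smul c x = x" "x \<noteq> 0"
  then obtain k where k: "Poly_Mapping.lookup x k \<noteq> 0"
    by (metis poly_mapping_eqI lookup_zero)
  from arg_cong[OF a(1), of "\<lambda>y. Poly_Mapping.lookup y k"] have "c * Poly_Mapping.lookup x k = Poly_Mapping.lookup x k"
    by simp
  with k show "c = 1" by simp
qed

lemma ep_G: "g \<in> G \<Longrightarrow> ep g = 1"
  using counit1_ext[of g] by (simp add: GD counit1_tens smul_eq_self)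

lemma Sg_g: "g \<in> G \<Longrightarrow> m (Sl g) g = u"
  using anti1_ext[of g] by (simp add: GD anti1_tens ep_G)
lemma g_Sg: "g \<in> G \<Longrightarrow> m g (Sl g) = u"
  using anti2_ext[of g] by (simp add: GD anti2_tens ep_G)

lemma u_nz: "u \<noteq> 0"
  using ax_epsu by (auto simp: lfun_def)

lemma cancel1[simp]: "g \<in> G \<Longrightarrow> m (Sl g) (m g z) = z"
  by (simp flip: assoc add: Sg_g)
lemma cancel2[simp]: "g \<in> G \<Longrightarrow> m g (m (Sl g) z) = z"
  by (simp flip: assoc add: g_Sg)

lemma m_zero2[simp]: "m x 0 = 0"
  by (rule lin_zero[OF lin_m2])

lemma prod_G: "g \<in> G \<Longrightarrow> h \<in> G \<Longrightarrow> m g h \<in> G"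
proof -
  assume g: "g \<in> G" and h: "h \<in> G"
  have "m g h \<noteq> 0"
  proof
    assume "m g h = 0"
    then have "m (Sl g) (m g h) = 0" by simp
    with g h show False by (simp add: GD)
  qed
  moreover have "Dl (m g h) = tens (m g h) (m g h)"
    using g h by (simp add: mult GD tens_mult)
  ultimately show ?thesis by (simp add: grouplikes_def)
qed

lemma S_G: "g \<in> G \<Longrightarrow> Sl g \<in> G"
proof -
  assume g: "g \<in> G"
  have "Sl g \<noteq> 0"
  proof
    assume "Sl g = 0"
    then have "m (Sl g) g = 0" using lin_zero[OF lin_m1] by simp
    with g u_nz show False by (simp add: Sg_g)
  qed
  moreover have "Dl (Sl g) = tens (Sl g) (Sl g)"
  proof -
    have "Dl (Sl g) = M2 (Dl (Sl g)) (tens u u)" by (simp add: unit2_r)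
    also have "tens u u = M2 (tens g g) (tens (Sl g) (Sl g))"
      using g by (simp add: tens_mult g_Sg)
    also have "M2 (Dl (Sl g)) (M2 (tens g g) (tens (Sl g) (Sl g))) = M2 (M2 (Dl (Sl g)) (Dl g)) (tens (Sl g) (Sl g))"
      using g by (simp add: assoc2 GD)
    also have "M2 (Dl (Sl g)) (Dl g) = tens u u"
      using g by (simp flip: mult add: Sg_g ax_Du)
    finally show ?thesis by (simp add: unit2_l)
  qed
  ultimately show ?thesis by (simp add: grouplikes_def)
qed

lemma inv_unique: "g \<in> G \<Longrightarrow> m g h = u \<Longrightarrow> h = Sl g"
proof -
  assume g: "g \<in> G" and e: "m g h = u"
  have "h = m (Sl g) (m g h)" using g by simp
  also have "\<dots> = Sl g" using e by simp
  finally show ?thesis .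
qed

lemma SS: "g \<in> G \<Longrightarrow> Sl (Sl g) = g"
  using inv_unique[OF S_G Sg_g] by simp

lemma skew_mult: "a \<in> G \<Longrightarrow> x \<in> skew_prim D g h \<Longrightarrow> m a x \<in> skew_prim D (m a g) (m a h)"
  by (simp add: skew_prim_def mult GD lin_add[OF lin_M2] tens_mult)

end


lemma in_span_finite:
  assumes "x \<in> vs.span B"
  shows "\<exists>T. finite T \<and> T \<subseteq> B \<and> x \<in> vs.span T"
proof -
  from assms obtain t r where t: "finite t" "t \<subseteq> B" "x = (\<Sum>a\<in>t. smul (r a) a)"
    unfolding vs.span_explicit by blast
  have "x \<in> vs.span t"
    unfolding t(3) by (intro vs.span_sum vs.span_scale vs.span_base)
  with t show ?thesis by blast
qed

lemma basis_lepoll_inf: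
  fixes A B :: "('b \<Rightarrow>\<^sub>0 'k::field) set"
  assumes indA: "vs.independent A" and sub: "A \<subseteq> vs.span B" and inf: "infinite B"
  shows "A \<lesssim> B"
proof -
  define F where "F x = (SOME T. finite T \<and> T \<subseteq> B \<and> x \<in> vs.span T)" for x
  have F: "finite (F x) \<and> F x \<subseteq> B \<and> x \<in> vs.span (F x)" if "x \<in> A" for x
    unfolding F_def by (rule someI_ex, rule in_span_finite) (use sub that in auto)
  have "A \<lesssim> Sigma (Fpow B) (\<lambda>T. A \<inter> vs.span T)"
    unfolding lepoll_def
    by (rule exI[of _ "\<lambda>x. (F x, x)"]) (use F in \<open>force simp: inj_on_def Fpow_def\<close>)
  also have "\<dots> \<lesssim> Sigma (Fpow B) (\<lambda>T. (UNIV :: nat set))"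
  proof (rule Sigma_lepoll_mono)
    fix T assume "T \<in> Fpow B"
    then have "finite T" by (simp add: Fpow_def)
    moreover have "vs.independent (A \<inter> vs.span T)"
      using indA by (rule vs.independent_mono) auto
    ultimately have "finite (A \<inter> vs.span T)"
      using vs.independent_span_bound by blast
    then show "A \<inter> vs.span T \<lesssim> (UNIV :: nat set)"
      by (intro finite_lepoll_infinite) auto
  qed simp
  also have "\<dots> \<lesssim> B \<times> B"
    by (rule times_lepoll_mono) (use eqpoll_Fpow[OF inf] infinite_le_lepoll inf in \<open>auto intro: eqpoll_imp_lepoll\<close>)
  also have "B \<times> B \<approx> B"
    unfolding eqpoll_iff_card_of_ordIso using card_of_Times_same_infinite[OF inf] .
  finally show ?thesis .
qed

lemma basis_eqpoll:
  fixes A B :: "('b \<Rightarrow>\<^sub>0 'k::field) set"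
  assumes iA: "vs.independent A" and iB: "vs.independent B" and sp: "vs.span A = vs.span B"
  shows "A \<approx> B"
proof (cases "finite B")
  case True
  have "finite A \<and> card A \<le> card B"
    using vs.independent_span_bound[OF True iA] sp vs.span_superset by blast
  moreover have "card B \<le> card A"
    using vs.independent_span_bound[OF _ iB] sp vs.span_superset calculation by blast
  ultimately show ?thesis using True by (simp add: eqpoll_iff_card)
next
  case False
  then have infA: "infinite A"
    using vs.independent_span_bound[OF _ iB] sp vs.span_superset by blast
  have "A \<lesssim> B" by (rule basis_lepoll_inf[OF iA _ False]) (use sp vs.span_superset in auto)
  moreover have "B \<lesssim> A" by (rule basis_lepoll_inf[OF iB _ infA]) (use sp vs.span_superset in auto)
  ultimately show ?thesis by (rule lepoll_antisym)
qed



lemma smul_nz_eq0: "smul c (w::'c \<Rightarrow>\<^sub>0 'k::field) = 0 \<Longrightarrow> w \<noteq> 0 \<Longrightarrow> c = 0"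
proof -
  assume a: "smul c w = 0" "w \<noteq> 0"
  then obtain k where k: "Poly_Mapping.lookup w k \<noteq> 0"
    by (metis poly_mapping_eqI lookup_zero)
  from arg_cong[OF a(1), of "\<lambda>y. Poly_Mapping.lookup y k"] have "c * Poly_Mapping.lookup w k = 0"
    by simp
  with k show "c = 0" by simp
qed

lemma qb_transport:
  assumes qb: "quot_basis D g h B" and L: "lin L" and L': "lin L'"
    and LL: "\<And>x. L' (L x) = x" and LL': "\<And>y. L (L' y) = y"
    and P: "\<And>x. x \<in> skew_prim D g h \<Longrightarrow> L x \<in> skew_prim D g' h'"
    and P': "\<And>y. y \<in> skew_prim D g' h' \<Longrightarrow> L' y \<in> skew_prim D g h"
    and w: "L (g - h) = g' - h'"
  shows "quot_basis D g' h' (L ` B)"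
proof -
  have w': "L' (g' - h') = g - h" using w LL by metis
  have injL': "inj_on L' X" for X by (metis LL' inj_onI)
  have B: "B \<subseteq> skew_prim D g h"
    and ind: "\<And>X c. finite X \<Longrightarrow> X \<subseteq> B \<Longrightarrow> (\<Sum>x\<in>X. smul (c x) x) \<in> range (\<lambda>a. smul a (g - h)) \<Longrightarrow> \<forall>x\<in>X. c x = 0"
    and spn: "\<And>x. x \<in> skew_prim D g h \<Longrightarrow> \<exists>X c a. finite X \<and> X \<subseteq> B \<and> x = smul a (g - h) + (\<Sum>y\<in>X. smul (c y) y)"
    using qb unfolding quot_basis_def by simp_all
  show ?thesis
    unfolding quot_basis_def
  proof (intro conjI allI impI ballI)
    show "L ` B \<subseteq> skew_prim D g' h'" using B P by blast
  next
    fix X c x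
    assume a: "finite X \<and> X \<subseteq> L ` B \<and> (\<Sum>x\<in>X. smul (c x) x) \<in> range (\<lambda>a. smul a (g' - h'))"
      and x: "x \<in> X"
    then obtain a where ea: "(\<Sum>x\<in>X. smul (c x) x) = smul a (g' - h')" by blast
    have Y: "L' ` X \<subseteq> B" using a LL by auto
    have "(\<Sum>y\<in>L' ` X. smul (c (L y)) y) = (\<Sum>x\<in>X. smul (c (L (L' x))) (L' x))"
      by (rule sum.reindex[OF injL', unfolded comp_def])
    also have "\<dots> = L' (\<Sum>x\<in>X. smul (c x) x)"
      by (simp add: LL' lin_sum[OF L'] lin_smul[OF L'])
    also have "\<dots> = smul a (g - h)"
      by (simp add: ea lin_smul[OF L'] w')
    finally have "(\<Sum>y\<in>L' ` X. smul (c (L y)) y) \<in> range (\<lambda>a. smul a (g - h))"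
      by (rule range_eqI)
    then have "\<forall>y\<in>L' ` X. c (L y) = 0"
      using a Y by (intro ind[of "L' ` X" "\<lambda>y. c (L y)"]) auto
    from bspec[OF this imageI[OF x]] have "c (L (L' x)) = 0" .
    then show "c x = 0" by (simp add: LL')
  next
    fix y assume y: "y \<in> skew_prim D g' h'"
    then obtain X c a where X: "finite X" "X \<subseteq> B" "L' y = smul a (g - h) + (\<Sum>z\<in>X. smul (c z) z)"
      using spn[OF P'[OF y]] by blast
    have "y = L (L' y)" by (simp add: LL')
    also have "\<dots> = smul a (g' - h') + (\<Sum>z\<in>X. smul (c z) (L z))"
      by (simp add: X(3) lin_add[OF L] lin_smul[OF L] lin_sum[OF L] w)
    also have "(\<Sum>z\<in>X. smul (c z) (L z)) = (\<Sum>x\<in>L ` X. smul (c (L' x)) x)"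
      proof -
      have "inj_on L X" by (metis LL inj_onI)
      show ?thesis by (simp only: sum.reindex[OF \<open>inj_on L X\<close>] comp_def LL)
    qed
    finally have e: "y = smul a (g' - h') + (\<Sum>x\<in>L ` X. smul (c (L' x)) x)" .
    show "\<exists>X c a. finite X \<and> X \<subseteq> L ` B \<and> y = smul a (g' - h') + (\<Sum>y\<in>X. smul (c y) y)"
      by (rule exI[of _ "L ` X"], rule exI[of _ "\<lambda>x. c (L' x)"], rule exI[of _ a]) (use X e in auto)
  qed
qed

context hopf begin

lemma diff_skew: "g \<in> G \<Longrightarrow> h \<in> G \<Longrightarrow> g - h \<in> skew_prim D g h"
  by (simp add: skew_prim_def lin_minus[OF lin_lext] GD lin_minus[OF lin_tens1] lin_minus[OF lin_tens2])

lemma qb_basis: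
  assumes g: "g \<in> G" and h: "h \<in> G" and qb: "quot_basis D g h B"
  shows "vs.independent (B \<union> ({g - h} - {0}))"
    and "vs.span (B \<union> ({g - h} - {0})) = vs.span (skew_prim D g h)"
    and "g - h \<noteq> 0 \<Longrightarrow> g - h \<notin> B"
proof -
  let ?w = "g - h"
  have Bs: "B \<subseteq> skew_prim D g h"
    and ind: "\<And>X c. finite X \<Longrightarrow> X \<subseteq> B \<Longrightarrow> (\<Sum>x\<in>X. smul (c x) x) \<in> range (\<lambda>a. smul a (g - h)) \<Longrightarrow> \<forall>x\<in>X. c x = 0"
    and spn: "\<And>x. x \<in> skew_prim D g h \<Longrightarrow> \<exists>X c a. finite X \<and> X \<subseteq> B \<and> x = smul a (g - h) + (\<Sum>y\<in>X. smul (c y) y)"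
    using qb unfolding quot_basis_def by simp_all
  show wB: "?w \<notin> B" if "?w \<noteq> 0"
  proof
    assume "?w \<in> B"
    then have "\<forall>x\<in>{?w}. (\<lambda>_. 1::'k) x = 0"
      by (intro ind) (auto intro: image_eqI[of _ _ 1])
    then show False by simp
  qed
  show "vs.independent (B \<union> ({?w} - {0}))"
    unfolding vs.independent_explicit_module
  proof (intro allI impI)
    fix t c v
    assume t: "finite t" "t \<subseteq> B \<union> ({?w} - {0})" "(\<Sum>v\<in>t. smul (c v) v) = 0" "v \<in> t"
    show "c v = 0"
    proof (cases "?w \<noteq> 0 \<and> ?w \<in> t")
      case False
      then have "t \<subseteq> B" using t by auto
      moreover have "(\<Sum>v\<in>t. smul (c v) v) \<in> range (\<lambda>a. smul a ?w)"
        using t by (auto intro: image_eqI[of _ _ 0])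
      ultimately show ?thesis using ind t by blast
    next
      case True
      have s: "(\<Sum>v\<in>t. smul (c v) v) = smul (c ?w) ?w + (\<Sum>v\<in>t - {?w}. smul (c v) v)"
        by (rule sum.remove[OF t(1)]) (use True in blast)
      have "(\<Sum>v\<in>t - {?w}. smul (c v) v) = smul (- c ?w) ?w"
      proof -
        have "(\<Sum>v\<in>t - {?w}. smul (c v) v) = - smul (c ?w) ?w"
          using s t(3) by (simp add: eq_neg_iff_add_eq_0 add.commute)
        also have "\<dots> = smul (- c ?w) ?w"
          by (rule poly_mapping_eqI) simp
        finally show ?thesis .
      qed
      then have r: "(\<Sum>v\<in>t - {?w}. smul (c v) v) \<in> range (\<lambda>a. smul a ?w)"
        by (rule range_eqI)
      have z: "\<forall>x\<in>t - {?w}. c x = 0"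
        by (rule ind[OF _ _ r]) (use t in auto)
      then have "(\<Sum>v\<in>t - {?w}. smul (c v) v) = 0" by simp
      with s t(3) have "smul (c ?w) ?w = 0" by simp
      then have "c ?w = 0" using True smul_nz_eq0 by blast
      with z t(4) show ?thesis by auto
    qed
  qed
  show "vs.span (B \<union> ({?w} - {0})) = vs.span (skew_prim D g h)"
    unfolding vs.span_eq
  proof
    show "B \<union> ({?w} - {0}) \<subseteq> vs.span (skew_prim D g h)"
      using Bs diff_skew[OF g h] vs.span_superset by blast
    show "skew_prim D g h \<subseteq> vs.span (B \<union> ({?w} - {0}))"
    proof
      fix x assume "x \<in> skew_prim D g h"
      then obtain X c a where X: "finite X" "X \<subseteq> B" "x = smul a ?w + (\<Sum>y\<in>X. smul (c y) y)"
        using spn by blast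
      have "smul a ?w \<in> vs.span (B \<union> ({?w} - {0}))"
        by (cases "?w = 0") (auto intro: vs.span_scale vs.span_base vs.span_zero)
      moreover have "(\<Sum>y\<in>X. smul (c y) y) \<in> vs.span (B \<union> ({?w} - {0}))"
        using X by (intro vs.span_sum vs.span_scale vs.span_base) auto
      ultimately show "x \<in> vs.span (B \<union> ({?w} - {0}))"
        unfolding X(3) by (rule vs.span_add)
    qed
  qed
qed

lemma qb_eqpoll:
  assumes g: "g \<in> G" and h: "h \<in> G" and q1: "quot_basis D g h B1" and q2: "quot_basis D g h B2"
  shows "B1 \<approx> B2"
proof -
  have e: "B1 \<union> ({g - h} - {0}) \<approx> B2 \<union> ({g - h} - {0})"
    using qb_basis[OF g h q1] qb_basis[OF g h q2] by (intro basis_eqpoll) auto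
  show ?thesis
  proof (cases "g - h = 0")
    case True then show ?thesis using e by simp
  next
    case False
    then have "insert (g - h) B1 \<approx> insert (g - h) B2" using e by simp
    then show ?thesis
      by (rule insert_eqpoll_insertD[OF _ qb_basis(3)[OF g h q1 False] qb_basis(3)[OF g h q2 False]])
  qed
qed

end


context hopf begin

lemma phi_bij:
  assumes v: "v \<in> G"
  shows "bij_betw (\<lambda>g. m (m v (Sl g)) v) G G"
proof -
  let ?f = "\<lambda>g. m (m v (Sl g)) v"
  have inG: "?f g \<in> G" if "g \<in> G" for g
    using that v by (intro prod_G S_G)
  have bk: "Sl g = m (Sl v) (m (?f g) (Sl v))" if "g \<in> G" for g
    using that v by (simp add: assoc g_Sg)
  have inj: "inj_on ?f G"
  proof (rule inj_onI)
    fix g g' assume g: "g \<in> G" and g': "g' \<in> G" and e: "?f g = ?f g'"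
    have "Sl g = Sl g'" using bk[OF g] bk[OF g'] e by simp
    then have "Sl (Sl g) = Sl (Sl g')" by simp
    then show "g = g'" using g g' by (simp add: SS)
  qed
  have surj: "h \<in> ?f ` G" if h: "h \<in> G" for h
  proof
    let ?k = "m (Sl v) (m h (Sl v))"
    have k: "?k \<in> G" using h v by (intro prod_G S_G)
    show "Sl ?k \<in> G" using k by (rule S_G)
    show "h = ?f (Sl ?k)"
      using k h v by (simp add: SS assoc Sg_g)
  qed
  show ?thesis
    unfolding bij_betw_def using inj inG surj by blast
qed

lemma arrows_eqpoll:
  assumes v: "v \<in> G" and g: "g \<in> G"
    and qb1: "quot_basis D g v B1" and qb2: "quot_basis D v (m (m v (Sl g)) v) B2"
  shows "B1 \<approx> B2"
proof -
  define a where "a = m v (Sl g)"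
  have a: "a \<in> G" unfolding a_def using v g by (intro prod_G S_G)
  have e1: "m a g = v" unfolding a_def using g by (simp add: assoc Sg_g)
  have phiG: "m a v \<in> G" using a v by (rule prod_G)
  have "quot_basis D (m a g) (m a v) ((\<lambda>x. m a x) ` B1)"
  proof (rule qb_transport[OF qb1 lin_m2 lin_m2])
    show "m (Sl a) (m a x) = x" for x using a by simp
    show "m a (m (Sl a) y) = y" for y using a by simp
    show "m a x \<in> skew_prim D (m a g) (m a v)" if "x \<in> skew_prim D g v" for x
      using skew_mult[OF a that] .
    show "m (Sl a) y \<in> skew_prim D g v" if "y \<in> skew_prim D (m a g) (m a v)" for y
      using skew_mult[OF S_G[OF a] that] a by simp
    show "m a (g - v) = m a g - m a v" by (rule lin_minus[OF lin_m2])
  qed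
  then have q: "quot_basis D v (m (m v (Sl g)) v) ((\<lambda>x. m a x) ` B1)"
    using e1 by (simp add: a_def)
  have "B1 \<approx> (\<lambda>x. m a x) ` B1"
    by (rule eqpoll_sym, rule inj_on_image_eqpoll_self) (metis a cancel1 inj_onI)
  also have "\<dots> \<approx> B2"
    using qb_eqpoll[OF v _ q qb2] v g by (simp add: prod_G S_G)
  finally show ?thesis .
qed

end

theorem lemma4p3:
  fixes mu :: "'b \<Rightarrow> 'b \<Rightarrow> ('b \<Rightarrow>\<^sub>0 'k::field)"
    and u :: "'b \<Rightarrow>\<^sub>0 'k"
    and D :: "'b \<Rightarrow> ('b \<times> 'b \<Rightarrow>\<^sub>0 'k)"
    and eps :: "'b \<Rightarrow> 'k"
    and S :: "'b \<Rightarrow> ('b \<Rightarrow>\<^sub>0 'k)"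
    and B :: "('b \<Rightarrow>\<^sub>0 'k) \<Rightarrow> ('b \<Rightarrow>\<^sub>0 'k) \<Rightarrow> ('b \<Rightarrow>\<^sub>0 'k) set"
    and v :: "'b \<Rightarrow>\<^sub>0 'k"
  assumes "hopf_algebra mu u D eps S"
    and "pointed D"
    and "\<forall>g\<in>grouplikes D. \<forall>h\<in>grouplikes D. quot_basis D g h (B g h)"
    and "v \<in> grouplikes D"
  shows "Sigma (grouplikes D) (\<lambda>g. B g v) \<approx> Sigma (grouplikes D) (\<lambda>h. B v h)"
proof -
  interpret hopf mu u D eps S by unfold_locales (rule assms(1))
  show ?thesis
  proof (rule Sigma_eqpoll_cong[OF phi_bij[OF assms(4)]])
    fix g assume g: "g \<in> grouplikes D"
    have h: "m (m v (Sl g)) v \<in> grouplikes D"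
      using g assms(4) by (intro prod_G S_G)
    show "B g v \<approx> B v (m (m v (Sl g)) v)"
      by (rule arrows_eqpoll[OF assms(4) g]) (use assms(3) g h assms(4) in blast)+
  qed
qed


end
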